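(* Let $0<q<1$, $N\in\{\tfrac12,1,\tfrac32,2,\dots\}$, $n\in\{0,1,\dots,\lfloor N\rfloor\}$, and $\alpha\in\mathbb{C}$ with $\pm q\alpha, q^2\alpha^2\notin\{q^{-j}:j\in\mathbb{Z}_{\ge0}\}$. Then for all $x\in\mathbb{C}$: $${}_4\phi_3\!\left(\begin{matrix}q^{-2n-1},\alpha^2q^{2n+2},q^{-x-N-\frac12},-q^{x-N-\frac12}\\ q\alpha,-q\alpha,q^{-2N-1}\end{matrix};q,q\right)=\frac{q^{-x-N-\frac12}-q^{x-N-\frac12}}{1-q^{-2N-1}}\;{}_4\phi_3\!\left(\begin{matrix}q^{-2n},\alpha^2q^{2n+3},q^{-2x-2N-1},q^{2x-2N-1}\\ q^2\alpha^2,q^{-2N+1},q^{-2N}\end{matrix};q^2,q^2\right).$$ (Equivalently, $R_{2n+1}(q^{-x-N-\frac12}-q^{x-N-\frac12};\alpha,\alpha,q^{-2N-2},-1\,|\,q)=\frac{q^{-x-N-\frac12}-q^{x-N-\frac12}}{1-q^{-2N-1}}R_n(q^{-2x-2N-1}+q^{2x-2N-1};\alpha^2,q,q^{-2N-2},q^{-2N-2}\,|\,q^2)$.)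
   Context: $(x;q)_k=\prod_{j=0}^{k-1}(1-xq^j)$. ${}_4\phi_3\!\left(\begin{matrix}a_1,\dots,a_4\\ b_1,b_2,b_3\end{matrix};q,z\right)=\sum_{k\ge0}\frac{(a_1,\dots,a_4;q)_k}{(b_1,b_2,b_3,q;q)_k}z^k$, terminating here because of the numerator $q^{-2n-1}$ (base $q$) resp. $q^{-2n}$ (base $q^2$). $q$-Racah polynomials: $R_n(q^{-y}+\gamma\delta q^{y+1};\alpha,\beta,\gamma,\delta\,|\,q)={}_4\phi_3(q^{-n},\alpha\beta q^{n+1},q^{-y},\gamma\delta q^{y+1};\alpha q,\beta\delta q,\gamma q;q,q)$. *)

theory Defs
  imports Complex_Main
begin

definition qpoch :: "complex \<Rightarrow> complex \<Rightarrow> nat \<Rightarrow> complex" where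
  "qpoch x q k = (\<Prod>j<k. (1 - x * q ^ j))"

definition cqpow :: "real \<Rightarrow> complex \<Rightarrow> complex" where
  "cqpow q z = exp (z * of_real (ln q))"

text \<open>Terminating 4phi3 whose first numerator parameter is p^(-m) (base p):
  the series is summed over k = 0..m; all further terms vanish since
  (p^(-m);p)_k = 0 for k > m.\<close>
definition phi43_term :: "nat \<Rightarrow> complex \<Rightarrow> complex \<Rightarrow> complex \<Rightarrow> complex \<Rightarrow> complex
    \<Rightarrow> complex \<Rightarrow> complex \<Rightarrow> complex \<Rightarrow> complex" where
  "phi43_term m a2 a3 a4 b1 b2 b3 p z =
     (\<Sum>k\<le>m. (qpoch (inverse (p ^ m)) p k * qpoch a2 p k * qpoch a3 p k * qpoch a4 p k)
             / (qpoch b1 p k * qpoch b2 p k * qpoch b3 p k * qpoch p p k) * z ^ k)"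

end

theory Submission
  imports Defs "HOL-Computational_Algebra.Polynomial"
begin


definition A1 :: "complex \<Rightarrow> complex \<Rightarrow> complex \<Rightarrow> complex \<Rightarrow> complex" where
  "A1 q c al v = (1 - v^2) * (1 - q^2*al^2*v^2/c^2) / ((1 + v^2/c) * (1 + q*v^2/c))"

lemma A1_eq: assumes "c \<noteq> 0" "c + v*v \<noteq> 0" "c + q*(v*v) \<noteq> 0"
  shows "A1 q c al v = (1-v*v)*(c*c-q*q*(al*al)*(v*v))/((c+v*v)*(c+q*(v*v)))"
  unfolding A1_def using assms by (simp add: divide_simps power2_eq_square)

lemma A1_eq': assumes "c \<noteq> 0" "v \<noteq> 0" "c + v*v \<noteq> 0" "v*v + q*c \<noteq> 0"
  shows "A1 q c al (-(c/v)) = (v*v-c*c)*(v*v-q*q*(al*al))/((c+v*v)*(v*v+q*c))"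
proof -
  have "v*v+c \<noteq> 0" using assms by (simp add: add.commute)
  then show ?thesis
  unfolding A1_def using assms by (simp add: divide_simps power2_eq_square)
qed

lemma fr:
  fixes d1 d2 d3 K T n1 n2 p1 p2 r :: complex
  assumes "d1 \<noteq> 0" "d2 \<noteq> 0" "d3 \<noteq> 0" "K \<noteq> 0" "T \<noteq> 0"
    "n1*d3*T*p1 + n2*d2*T*p2 = d1*d2*d3*r"
  shows "n1/(d1*d2)*(p1/K) + n2/(d1*d3)*(p2/K) = r/(K*T)"
proof -
  have "n1/(d1*d2)*(p1/K) + n2/(d1*d3)*(p2/K) = (n1*d3*T*p1 + n2*d2*T*p2)/(d1*d2*d3*(K*T))"
    using assms(1-5) by (simp add: field_simps)
  also have "\<dots> = (d1*d2*d3*r)/(d1*d2*d3*(K*T))" using assms(6) by simp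
  also have "\<dots> = r/(K*T)" using assms(1-5) by simp
  finally show ?thesis .
qed


lemma ratg:
  fixes q c al v t :: complex
  assumes q: "q \<noteq> 0" and c: "c \<noteq> 0" and v: "v \<noteq> 0" and t: "t \<noteq> 0"
    and d1: "c + v*v \<noteq> 0" and d2: "c + q*(v*v) \<noteq> 0" and d3: "v*v + q*c \<noteq> 0"
  shows "A1 q c al v * ((1 - v*t)*(1 - v*t*q)*(1 + c/(q*v))*(1 + c/v) - (1-v)*(1-v*t)*(1+c/v)*(1+c*t/v))
       + A1 q c al (-(c/v)) * ((1-v/q)*(1-v)*(1+c*t/v)*(1+c*t*q/v) - (1-v)*(1-v*t)*(1+c/v)*(1+c*t/v))
     = (1/(q*t) - 1)*(1 - al^2*q^2*t) * ((1-v)*(1-v*t)*(1+c/v)*(1+c*t/v))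
       - (1/(q*t)-1)*(1-al^2*q^2*t^2)*(1-c*t) * ((1-v)*(1+c/v))"
proof -
  define p1 where "p1 = (1-v*t)*(1-v*t*q)*(q*v+c)*(v+c)-q*(1-v)*(1-v*t)*(v+c)*(v+c*t)"
  define p2 where "p2 = (q-v)*(1-v)*(v+c*t)*(v+c*t*q)-q*(1-v)*(1-v*t)*(v+c)*(v+c*t)"
  define p3 where "p3 = (1-al*al*q*q*t)*(1-v)*(1-v*t)*(v+c)*(v+c*t)-(1-al*al*q*q*t*t)*(1-c*t)*v*(1-v)*(v+c)"
  have x1: "(1 - v*t)*(1 - v*t*q)*(1 + c/(q*v))*(1 + c/v) - (1-v)*(1-v*t)*(1+c/v)*(1+c*t/v) = p1/(q*(v*v))"
    unfolding p1_def by (simp add: divide_simps q v; algebra)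
  have x2: "(1-v/q)*(1-v)*(1+c*t/v)*(1+c*t*q/v) - (1-v)*(1-v*t)*(1+c/v)*(1+c*t/v) = p2/(q*(v*v))"
    unfolding p2_def by (simp add: divide_simps q v; algebra)
  have x3: "(1/(q*t) - 1)*(1 - al^2*q^2*t) * ((1-v)*(1-v*t)*(1+c/v)*(1+c*t/v))
       - (1/(q*t)-1)*(1-al^2*q^2*t^2)*(1-c*t) * ((1-v)*(1+c/v)) = ((1-q*t)*q*p3)/((q*(v*v))*(q*t))"
    unfolding p3_def by (simp add: divide_simps q v t power2_eq_square; algebra)
  have pid: "((1-v*v)*(c*c-q*q*(al*al)*(v*v)))*(v*v+q*c)*(q*t)*p1 + ((v*v-c*c)*(v*v-q*q*(al*al)))*(c+q*(v*v))*(q*t)*p2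
      = (c+v*v)*(c+q*(v*v))*(v*v+q*c)*((1-q*t)*q*p3)"
    unfolding p1_def p2_def p3_def by algebra
  show ?thesis
    apply (simp only: A1_eq[OF c d1 d2] A1_eq'[OF c v d1 d3] x1 x2 x3)
    apply (rule fr)
    using d1 d2 d3 q v t pid by auto
qed


lemma ratg1:
  fixes q c al v  :: complex
  assumes q: "q \<noteq> 0" and c: "c \<noteq> 0" and v: "v \<noteq> 0"
    and d1: "c + v*v \<noteq> 0" and d2: "c + q*(v*v) \<noteq> 0" and d3: "v*v + q*c \<noteq> 0"
  shows "A1 q c al v * ((1-q*v)*(1+c/(q*v)) - (1-v)*(1+c/v)) + A1 q c al (-(c/v)) * ((1-v/q)*(1+c*q/v) - (1-v)*(1+c/v)) = (1/q-1)*(1-al*al*(q*q))*((1-v)*(1+c/v)) - (1/q-1)*(1-al*al*(q*q))*(1-c)"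
proof -
  define p1 where "p1 = (1-q*v)*(q*v+c) - q*(1-v)*(v+c)"
  define p2 where "p2 = (q-v)*(v+c*q) - q*(1-v)*(v+c)"
  define r where "r = (1-q)*(1-al*al*(q*q))*((1-v)*(v+c) - (1-c)*v)"
  have x1: "(1-q*v)*(1+c/(q*v)) - (1-v)*(1+c/v) = p1/(q*v)"
    unfolding p1_def by (simp add: divide_simps q v; algebra)
  have x2: "(1-v/q)*(1+c*q/v) - (1-v)*(1+c/v) = p2/(q*v)"
    unfolding p2_def by (simp add: divide_simps q v; algebra)
  have x3: "(1/q-1)*(1-al*al*(q*q))*((1-v)*(1+c/v)) - (1/q-1)*(1-al*al*(q*q))*(1-c) = r/((q*v)*(1))"
    unfolding r_def by (simp add: divide_simps q v; algebra)
  have pid: "((1-v*v)*(c*c-q*q*(al*al)*(v*v)))*(v*v+q*c)*(1)*p1 + ((v*v-c*c)*(v*v-q*q*(al*al)))*(c+q*(v*v))*(1)*p2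
      = (c+v*v)*(c+q*(v*v))*(v*v+q*c)*r"
    unfolding p1_def p2_def r_def by algebra
  show ?thesis
    apply (simp only: A1_eq[OF c d1 d2] A1_eq'[OF c v d1 d3] x1 x2 x3)
    apply (rule fr)
    using d1 d2 d3 q v pid  by auto
qed

lemma rath0:
  fixes q c al v  :: complex
  assumes q: "q \<noteq> 0" and c: "c \<noteq> 0" and v: "v \<noteq> 0"
    and d1: "c + v*v \<noteq> 0" and d2: "c + q*(v*v) \<noteq> 0" and d3: "v*v + q*c \<noteq> 0"
  shows "A1 q c al v * ((q*v - c/(q*v)) - (v - c/v)) + A1 q c al (-(c/v)) * ((v/q - c*q/v) - (v - c/v)) = (1/q - 1)*(1-al*al*(q*q))*(v - c/v)"
proof -
  define p1 where "p1 = (q*q*(v*v) - c) - q*(v*v - c)"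
  define p2 where "p2 = (v*v - c*q*q) - q*(v*v-c)"
  define r where "r = (1-q)*(1-al*al*(q*q))*(v*v-c)"
  have x1: "(q*v - c/(q*v)) - (v - c/v) = p1/(q*v)"
    unfolding p1_def by (simp add: divide_simps q v; algebra)
  have x2: "(v/q - c*q/v) - (v - c/v) = p2/(q*v)"
    unfolding p2_def by (simp add: divide_simps q v; algebra)
  have x3: "(1/q - 1)*(1-al*al*(q*q))*(v - c/v) = r/((q*v)*(1))"
    unfolding r_def by (simp add: divide_simps q v; algebra)
  have pid: "((1-v*v)*(c*c-q*q*(al*al)*(v*v)))*(v*v+q*c)*(1)*p1 + ((v*v-c*c)*(v*v-q*q*(al*al)))*(c+q*(v*v))*(1)*p2
      = (c+v*v)*(c+q*(v*v))*(v*v+q*c)*r"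
    unfolding p1_def p2_def r_def by algebra
  show ?thesis
    apply (simp only: A1_eq[OF c d1 d2] A1_eq'[OF c v d1 d3] x1 x2 x3)
    apply (rule fr)
    using d1 d2 d3 q v pid  by auto
qed

lemma rath1:
  fixes q c al v  :: complex
  assumes q: "q \<noteq> 0" and c: "c \<noteq> 0" and v: "v \<noteq> 0"
    and d1: "c + v*v \<noteq> 0" and d2: "c + q*(v*v) \<noteq> 0" and d3: "v*v + q*c \<noteq> 0"
  shows "A1 q c al v * ((q*v - c/(q*v))*((1-q*q*(v*v))*(1-c*c/(q*q*(v*v)))) - (v - c/v)*((1-v*v)*(1-c*c/(v*v)))) + A1 q c al (-(c/v)) * ((v/q - c*q/v)*((1-v*v/(q*q))*(1-c*c*(q*q)/(v*v))) - (v-c/v)*((1-v*v)*(1-c*c/(v*v)))) = ((1/(q*q)-1)*(1-al*al*q^5)/q + (1/q-1)*(1-al*al*(q*q)))*((v - c/v)*((1-v*v)*(1-c*c/(v*v)))) + (-(1/(q*q)-1)*(1-al*al*(q*q))*(1-c*(q*q))*(1-c*q)/q)*(v - c/v)"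
proof -
  define p1 where "p1 = (q*q*(v*v)-c)*(1-q*q*(v*v))*(q*q*(v*v)-c*c) - q*q*q*(v*v-c)*(1-v*v)*(v*v-c*c)"
  define p2 where "p2 = (v*v-c*q*q)*(q*q-v*v)*(v*v-c*c*q*q) - q*q*q*(v*v-c)*(1-v*v)*(v*v-c*c)"
  define r where "r = ((1-q*q)*(1-al*al*q^5) + q*q*(1-q)*(1-al*al*(q*q)))*((v*v-c)*(1-v*v)*(v*v-c*c)) + (-(1-q*q)*(1-al*al*(q*q))*(1-c*(q*q))*(1-c*q))*((v*v)*(v*v-c))"
  have x1: "(q*v - c/(q*v))*((1-q*q*(v*v))*(1-c*c/(q*q*(v*v)))) - (v - c/v)*((1-v*v)*(1-c*c/(v*v))) = p1/(q*q*q*(v*v*v))"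
    unfolding p1_def by (simp add: divide_simps q v; algebra)
  have x2: "(v/q - c*q/v)*((1-v*v/(q*q))*(1-c*c*(q*q)/(v*v))) - (v-c/v)*((1-v*v)*(1-c*c/(v*v))) = p2/(q*q*q*(v*v*v))"
    unfolding p2_def by (simp add: divide_simps q v; algebra)
  have x3: "((1/(q*q)-1)*(1-al*al*q^5)/q + (1/q-1)*(1-al*al*(q*q)))*((v - c/v)*((1-v*v)*(1-c*c/(v*v)))) + (-(1/(q*q)-1)*(1-al*al*(q*q))*(1-c*(q*q))*(1-c*q)/q)*(v - c/v) = r/((q*q*q*(v*v*v))*(1))"
    unfolding r_def by (simp add: divide_simps q v; algebra)
  have pid: "((1-v*v)*(c*c-q*q*(al*al)*(v*v)))*(v*v+q*c)*(1)*p1 + ((v*v-c*c)*(v*v-q*q*(al*al)))*(c+q*(v*v))*(1)*p2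
      = (c+v*v)*(c+q*(v*v))*(v*v+q*c)*r"
    unfolding p1_def p2_def r_def by algebra
  show ?thesis
    apply (simp only: A1_eq[OF c d1 d2] A1_eq'[OF c v d1 d3] x1 x2 x3)
    apply (rule fr)
    using d1 d2 d3 q v pid  by auto
qed

lemma rath:
  fixes q c al v T :: complex
  assumes q: "q \<noteq> 0" and c: "c \<noteq> 0" and v: "v \<noteq> 0"
    and d1: "c + v*v \<noteq> 0" and d2: "c + q*(v*v) \<noteq> 0" and d3: "v*v + q*c \<noteq> 0"
    and T: "T \<noteq> 0"
  shows "A1 q c al v * ((q*v - c/(q*v)) * ((1-v*v*T)*(1-v*v*T*(q*q))*(1-c*c/(q*q*(v*v)))*(1-c*c/(v*v))) - (v - c/v) * ((1-v*v)*(1-v*v*T)*(1-c*c/(v*v))*(1-c*c*T/(v*v)))) + A1 q c al (-(c/v)) * ((v/q - c*q/v) * ((1-v*v/(q*q))*(1-v*v)*(1-c*c*T/(v*v))*(1-c*c*T*(q*q)/(v*v))) - (v - c/v) * ((1-v*v)*(1-v*v*T)*(1-c*c/(v*v))*(1-c*c*T/(v*v)))) = ((1/(q*q*T) - 1)*(1 - al*al*q^5*T)/q + (1/q - 1)*(1 - al*al*(q*q))) * ((v - c/v) * ((1-v*v)*(1-v*v*T)*(1-c*c/(v*v))*(1-c*c*T/(v*v)))) + (-(1/(q*q*T) - 1)*(1 - al*al*(q*q)*T)*(1 - c*(q*q)*T)*(1 - c*q*T)/q) * ((v - c/v) * ((1-v*v)*(1-c*c/(v*v))))"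
proof -
  define p1 where "p1 = (q*q*(v*v)-c)*(1-v*v*T)*(1-v*v*T*(q*q))*(q*q*(v*v)-c*c)*(v*v-c*c) - q*q*q*(v*v-c)*(1-v*v)*(1-v*v*T)*(v*v-c*c)*(v*v-c*c*T)"
  define p2 where "p2 = (v*v-c*q*q)*(q*q-v*v)*(1-v*v)*(v*v-c*c*T)*(v*v-c*c*T*(q*q)) - q*q*q*(v*v-c)*(1-v*v)*(1-v*v*T)*(v*v-c*c)*(v*v-c*c*T)"
  define r where "r = ((1-q*q*T)*(1-al*al*q^5*T) + q*q*T*(1-q)*(1-al*al*(q*q)))*((v*v-c)*(1-v*v)*(1-v*v*T)*(v*v-c*c)*(v*v-c*c*T)) + (-(1-q*q*T)*(1-al*al*(q*q)*T)*(1-c*(q*q)*T)*(1-c*q*T))*((v*v)*(v*v-c)*(1-v*v)*(v*v-c*c))"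
  have x1: "(q*v - c/(q*v)) * ((1-v*v*T)*(1-v*v*T*(q*q))*(1-c*c/(q*q*(v*v)))*(1-c*c/(v*v))) - (v - c/v) * ((1-v*v)*(1-v*v*T)*(1-c*c/(v*v))*(1-c*c*T/(v*v))) = p1/(q*q*q*(v*v*v*v*v))"
    unfolding p1_def by (simp add: divide_simps q v; algebra)
  have x2: "(v/q - c*q/v) * ((1-v*v/(q*q))*(1-v*v)*(1-c*c*T/(v*v))*(1-c*c*T*(q*q)/(v*v))) - (v - c/v) * ((1-v*v)*(1-v*v*T)*(1-c*c/(v*v))*(1-c*c*T/(v*v))) = p2/(q*q*q*(v*v*v*v*v))"
    unfolding p2_def by (simp add: divide_simps q v; algebra)
  have x3: "((1/(q*q*T) - 1)*(1 - al*al*q^5*T)/q + (1/q - 1)*(1 - al*al*(q*q))) * ((v - c/v) * ((1-v*v)*(1-v*v*T)*(1-c*c/(v*v))*(1-c*c*T/(v*v)))) + (-(1/(q*q*T) - 1)*(1 - al*al*(q*q)*T)*(1 - c*(q*q)*T)*(1 - c*q*T)/q) * ((v - c/v) * ((1-v*v)*(1-c*c/(v*v)))) = r/((q*q*q*(v*v*v*v*v))*(T))"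
    unfolding r_def by (simp add: divide_simps q v T; algebra)
  have pid: "((1-v*v)*(c*c-q*q*(al*al)*(v*v)))*(v*v+q*c)*(T)*p1 + ((v*v-c*c)*(v*v-q*q*(al*al)))*(c+q*(v*v))*(T)*p2
      = (c+v*v)*(c+q*(v*v))*(v*v+q*c)*r"
    unfolding p1_def p2_def r_def by algebra
  show ?thesis
    apply (simp only: A1_eq[OF c d1 d2] A1_eq'[OF c v d1 d3] x1 x2 x3)
    apply (rule fr)
    using d1 d2 d3 q v pid T by auto
qed



lemma qpoch_0 [simp]: "qpoch x p 0 = 1" by (simp add: qpoch_def)
lemma qpoch_Suc: "qpoch x p (Suc k) = qpoch x p k * (1 - x*p^k)" by (simp add: qpoch_def)
lemma qpoch_S1: "qpoch x p (Suc k) = (1-x)*qpoch (x*p) p k"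
  unfolding qpoch_def prod.lessThan_Suc_shift by (simp add: mult.assoc)
lemma qpoch_1 [simp]: "qpoch x p (Suc 0) = 1 - x" by (simp add: qpoch_def)

definition D1 :: "complex \<Rightarrow> complex \<Rightarrow> complex \<Rightarrow> (complex \<Rightarrow> complex) \<Rightarrow> complex \<Rightarrow> complex" where
  "D1 q c al f v = A1 q c al v * (f (q*v) - f v) + A1 q c al (-(c/v)) * (f (v/q) - f v)"

definition gb :: "complex \<Rightarrow> complex \<Rightarrow> nat \<Rightarrow> complex \<Rightarrow> complex" where
  "gb q c k v = qpoch v q k * qpoch (-(c/v)) q k"

definition hb :: "complex \<Rightarrow> complex \<Rightarrow> nat \<Rightarrow> complex \<Rightarrow> complex" where
  "hb q c k v = (v - c/v) * (qpoch (v*v) (q*q) k * qpoch (c*c/(v*v)) (q*q) k)"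

definition lam1 :: "complex \<Rightarrow> complex \<Rightarrow> nat \<Rightarrow> complex" where
  "lam1 q al k = (1/q^k - 1)*(1 - al*al*q^(k+1))"
definition mu1 :: "complex \<Rightarrow> complex \<Rightarrow> complex \<Rightarrow> nat \<Rightarrow> complex" where
  "mu1 q c al k = -(1/q^k - 1)*(1 - al*al*q^(2*k))*(1 - c*q^(k-1))"
definition lamh :: "complex \<Rightarrow> complex \<Rightarrow> nat \<Rightarrow> complex" where
  "lamh q al k = (1/(q*q)^k - 1)*(1 - al*al*q^(2*k+3))/q + (1/q - 1)*(1 - al*al*(q*q))"
definition muh :: "complex \<Rightarrow> complex \<Rightarrow> complex \<Rightarrow> nat \<Rightarrow> complex" where
  "muh q c al k = -(1/(q*q)^k - 1)*(1 - al*al*q^(2*k))*(1 - c*q^(2*k))*(1 - c*q^(2*k-1))/q"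

lemma basis_g:
  fixes q c al v :: complex
  assumes q: "q \<noteq> 0" and c: "c \<noteq> 0" and v: "v \<noteq> 0"
    and d1: "c + v*v \<noteq> 0" and d2: "c + q*(v*v) \<noteq> 0" and d3: "v*v + q*c \<noteq> 0"
  shows "D1 q c al (gb q c (Suc k)) v = lam1 q al (Suc k) * gb q c (Suc k) v + mu1 q c al (Suc k) * gb q c k v"
proof (cases k)
  case 0
  have e1: "-(c/(v/q)) = -(c*q/v)" using q v by (simp add: field_simps)
  have "D1 q c al (gb q c (Suc k)) v = A1 q c al v * ((1-q*v)*(1+c/(q*v)) - (1-v)*(1+c/v)) + A1 q c al (-(c/v)) * ((1-v/q)*(1+c*q/v) - (1-v)*(1+c/v))"
    unfolding D1_def gb_def 0 by (simp add: e1)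
  also have "\<dots> = (1/q-1)*(1-al*al*(q*q))*((1-v)*(1+c/v)) - (1/q-1)*(1-al*al*(q*q))*(1-c)"
    by (rule ratg1[OF q c v d1 d2 d3])
  also have "\<dots> = lam1 q al (Suc k) * gb q c (Suc k) v + mu1 q c al (Suc k) * gb q c k v"
    unfolding lam1_def mu1_def gb_def 0 by (simp add: power2_eq_square algebra_simps)
  finally show ?thesis .
next
  case (Suc i)
  define t where "t = q^(Suc i)"
  have t: "t \<noteq> 0" using q by (simp add: t_def)
  define X where "X = qpoch (v*q) q i * qpoch (-(c/v)*q) q i"
  have qq: "q^(Suc i) = q*q^i" by simp
  have G: "gb q c (Suc (Suc i)) v = X*((1-v)*(1-v*t)*(1+c/v)*(1+c*t/v))"
    unfolding gb_def X_def t_def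
    by (simp only: qpoch_S1[of v q "Suc i"] qpoch_Suc[of "v*q" q i] qpoch_S1[of "-(c/v)" q "Suc i"] qpoch_Suc[of "-(c/v)*q" q i]) (simp add: mult_ac)
  have G1: "gb q c (Suc i) v = X*((1-v)*(1+c/v))"
    unfolding gb_def X_def by (simp only: qpoch_S1[of v q i] qpoch_S1[of "-(c/v)" q i]) (simp add: mult_ac)
  have e2: "-(c/(q*v))*q = -(c/v)" using q v by (simp add: field_simps)
  have e0: "qpoch (q*v) q i = qpoch (v*q) q i" by (simp add: mult.commute)
  have GP: "gb q c (Suc (Suc i)) (q*v) = X*((1 - v*t)*(1 - v*t*q)*(1 + c/(q*v))*(1 + c/v))"
    unfolding gb_def X_def t_def
    apply (simp only: qpoch_Suc[of "q*v" q "Suc i"] qpoch_Suc[of "q*v" q i] qpoch_S1[of "-(c/(q*v))" q "Suc i"] e2 qpoch_S1[of "-(c/v)" q i] e0)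
    by (simp add: mult_ac)
  have e3: "v/q*q = v" using q by simp
  have e4: "-(c/(v/q)) = -(c/v)*q" using q v by (simp add: field_simps)
  have GM: "gb q c (Suc (Suc i)) (v/q) = X*((1-v/q)*(1-v)*(1+c*t/v)*(1+c*t*q/v))"
    unfolding gb_def X_def t_def
    apply (simp only: qpoch_S1[of "v/q" q "Suc i"] e3 qpoch_S1[of v q i] e4 qpoch_Suc[of "-(c/v)*q" q "Suc i"] qpoch_Suc[of "-(c/v)*q" q i])
    by (simp add: mult_ac)
  have "D1 q c al (gb q c (Suc k)) v = X * (A1 q c al v * ((1 - v*t)*(1 - v*t*q)*(1 + c/(q*v))*(1 + c/v) - (1-v)*(1-v*t)*(1+c/v)*(1+c*t/v))
       + A1 q c al (-(c/v)) * ((1-v/q)*(1-v)*(1+c*t/v)*(1+c*t*q/v) - (1-v)*(1-v*t)*(1+c/v)*(1+c*t/v)))"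
    unfolding D1_def Suc G GP GM by (simp add: algebra_simps)
  also have "\<dots> = X * ((1/(q*t) - 1)*(1 - al^2*q^2*t) * ((1-v)*(1-v*t)*(1+c/v)*(1+c*t/v))
       - (1/(q*t)-1)*(1-al^2*q^2*t^2)*(1-c*t) * ((1-v)*(1+c/v)))"
    using ratg[OF q c v t d1 d2 d3] by simp
  also have "\<dots> = lam1 q al (Suc k) * gb q c (Suc k) v + mu1 q c al (Suc k) * gb q c k v"
  proof -
    have qt: "q^(Suc (Suc i)) = q*t" unfolding t_def by simp
    have q2: "q^(2*Suc (Suc i)) = (q*t)^2" unfolding qt[symmetric] by (metis power_mult mult.commute)
    have L: "lam1 q al (Suc (Suc i)) = (1/(q*t) - 1)*(1 - al^2*q^2*t)"
      unfolding lam1_def qt by (simp add: power2_eq_square t_def mult_ac)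
    have M: "mu1 q c al (Suc (Suc i)) = - ((1/(q*t)-1)*(1-al^2*q^2*t^2)*(1-c*t))"
      unfolding mu1_def qt q2 by (simp add: power2_eq_square t_def mult_ac) (simp add: algebra_simps)
    have lin: "\<And>X a P b Q :: complex. X*(a*P - b*Q) = a*(X*P) + (-b)*(X*Q)" by (simp add: algebra_simps)
    show ?thesis unfolding Suc G G1 L M by (rule lin)
  qed
  finally show ?thesis .
qed


lemma basis_h0:
  fixes q c al v :: complex
  assumes q: "q \<noteq> 0" and c: "c \<noteq> 0" and v: "v \<noteq> 0"
    and d1: "c + v*v \<noteq> 0" and d2: "c + q*(v*v) \<noteq> 0" and d3: "v*v + q*c \<noteq> 0"
  shows "D1 q c al (hb q c 0) v = lamh q al 0 * hb q c 0 v"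
proof -
  have e1: "c/(v/q) = c*q/v" using q v by (simp add: field_simps)
  have "D1 q c al (hb q c 0) v = A1 q c al v * ((q*v - c/(q*v)) - (v - c/v)) + A1 q c al (-(c/v)) * ((v/q - c*q/v) - (v - c/v))"
    unfolding D1_def hb_def by (simp add: e1)
  also have "\<dots> = (1/q - 1)*(1-al*al*(q*q))*(v - c/v)"
    by (rule rath0[OF q c v d1 d2 d3])
  also have "\<dots> = lamh q al 0 * hb q c 0 v"
    unfolding lamh_def hb_def by simp
  finally show ?thesis .
qed

lemma basis_h:
  fixes q c al v :: complex
  assumes q: "q \<noteq> 0" and c: "c \<noteq> 0" and v: "v \<noteq> 0"
    and d1: "c + v*v \<noteq> 0" and d2: "c + q*(v*v) \<noteq> 0" and d3: "v*v + q*c \<noteq> 0"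
  shows "D1 q c al (hb q c (Suc k)) v = lamh q al (Suc k) * hb q c (Suc k) v + muh q c al (Suc k) * hb q c k v"
proof (cases k)
  case 0
  have e1: "c/(v/q) = c*q/v" using q v by (simp add: field_simps)
  have e2: "c*c/((v/q)*(v/q)) = c*c*(q*q)/(v*v)" using q v by (simp add: field_simps)
  have e3: "c*c/((q*v)*(q*v)) = c*c/(q*q*(v*v))" using q v by (simp add: field_simps)
  have e4: "(v/q)*(v/q) = v*v/(q*q)" using q by (simp add: field_simps)
  have "D1 q c al (hb q c (Suc k)) v = A1 q c al v * ((q*v - c/(q*v))*((1-q*q*(v*v))*(1-c*c/(q*q*(v*v)))) - (v - c/v)*((1-v*v)*(1-c*c/(v*v)))) + A1 q c al (-(c/v)) * ((v/q - c*q/v)*((1-v*v/(q*q))*(1-c*c*(q*q)/(v*v))) - (v-c/v)*((1-v*v)*(1-c*c/(v*v))))"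
    unfolding D1_def hb_def 0 by (simp only: e1 e2 e3 e4 qpoch_1) (simp add: algebra_simps)
  also have "\<dots> = ((1/(q*q)-1)*(1-al*al*q^5)/q + (1/q-1)*(1-al*al*(q*q)))*((v - c/v)*((1-v*v)*(1-c*c/(v*v)))) + (-(1/(q*q)-1)*(1-al*al*(q*q))*(1-c*(q*q))*(1-c*q)/q)*(v - c/v)"
    by (rule rath1[OF q c v d1 d2 d3])
  also have "\<dots> = lamh q al (Suc k) * hb q c (Suc k) v + muh q c al (Suc k) * hb q c k v"
    unfolding lamh_def muh_def hb_def 0 by (simp add: power2_eq_square algebra_simps)
  finally show ?thesis .
next
  case (Suc i)
  define T where "T = (q*q)^(Suc i)"
  have T: "T \<noteq> 0" using q by (simp add: T_def)
  define Y where "Y = qpoch (v*v*(q*q)) (q*q) i * qpoch (c*c/(v*v)*(q*q)) (q*q) i"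
  have fa: "v*v*(q*q)*(q*q)^i = v*v*T" by (simp add: T_def mult_ac)
  have fb: "c*c/(v*v)*(q*q)*(q*q)^i = c*c*T/(v*v)" by (simp add: T_def mult_ac)
  have fc: "v*v*(q*q)*(q*q)^Suc i = v*v*T*(q*q)" by (simp add: T_def mult_ac)
  have fd: "c*c/(v*v)*(q*q)*(q*q)^Suc i = c*c*T*(q*q)/(v*v)" by (simp add: T_def mult_ac)
  have G: "hb q c (Suc (Suc i)) v = (v - c/v) * (Y*((1-v*v)*(1-v*v*T)*(1-c*c/(v*v))*(1-c*c*T/(v*v))))"
    unfolding hb_def Y_def
    apply (simp only: qpoch_S1[of "v*v" "q*q" "Suc i"] qpoch_Suc[of "v*v*(q*q)" "q*q" i] qpoch_S1[of "c*c/(v*v)" "q*q" "Suc i"] qpoch_Suc[of "c*c/(v*v)*(q*q)" "q*q" i] fa fb)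
    by (simp only: mult_ac)
  have G1: "hb q c (Suc i) v = (v - c/v) * (Y*((1-v*v)*(1-c*c/(v*v))))"
    unfolding hb_def Y_def by (simp only: qpoch_S1[of "v*v" "q*q" i] qpoch_S1[of "c*c/(v*v)" "q*q" i] mult_ac)
  have e1: "(q*v)*(q*v) = v*v*(q*q)" by (simp add: algebra_simps)
  have e2: "c*c/(v*v*(q*q)) = c*c/(q*q*(v*v))" by (simp add: mult_ac)
  have e2': "c*c/(q*q*(v*v))*(q*q) = c*c/(v*v)" using q v by (simp add: field_simps)
  have GP: "hb q c (Suc (Suc i)) (q*v) = (q*v - c/(q*v)) * (Y*((1-v*v*T)*(1-v*v*T*(q*q))*(1-c*c/(q*q*(v*v)))*(1-c*c/(v*v))))"
    unfolding hb_def Y_def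
    apply (simp only: e1 e2 qpoch_Suc[of "v*v*(q*q)" "q*q" "Suc i"] qpoch_Suc[of "v*v*(q*q)" "q*q" i] qpoch_S1[of "c*c/(q*q*(v*v))" "q*q" "Suc i"] e2' qpoch_S1[of "c*c/(v*v)" "q*q" i] fa fc)
    by (simp only: mult_ac)
  have e3: "(v/q)*(v/q) = v*v/(q*q)" using q by (simp add: field_simps)
  have e3': "v*v/(q*q)*(q*q) = v*v" using q by simp
  have e4: "c*c/(v*v/(q*q)) = c*c/(v*v)*(q*q)" using q v by (simp add: field_simps)
  have e5: "c/(v/q) = c*q/v" using q v by (simp add: field_simps)
  have GM: "hb q c (Suc (Suc i)) (v/q) = (v/q - c*q/v) * (Y*((1-v*v/(q*q))*(1-v*v)*(1-c*c*T/(v*v))*(1-c*c*T*(q*q)/(v*v))))"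
    unfolding hb_def Y_def
    apply (simp only: e3 e4 e5 qpoch_S1[of "v*v/(q*q)" "q*q" "Suc i"] e3' qpoch_S1[of "v*v" "q*q" i] qpoch_Suc[of "c*c/(v*v)*(q*q)" "q*q" "Suc i"] qpoch_Suc[of "c*c/(v*v)*(q*q)" "q*q" i] fb fd)
    by (simp only: mult_ac)
  have "D1 q c al (hb q c (Suc k)) v = Y * (A1 q c al v * ((q*v - c/(q*v)) * ((1-v*v*T)*(1-v*v*T*(q*q))*(1-c*c/(q*q*(v*v)))*(1-c*c/(v*v))) - (v - c/v) * ((1-v*v)*(1-v*v*T)*(1-c*c/(v*v))*(1-c*c*T/(v*v))))
       + A1 q c al (-(c/v)) * ((v/q - c*q/v) * ((1-v*v/(q*q))*(1-v*v)*(1-c*c*T/(v*v))*(1-c*c*T*(q*q)/(v*v))) - (v - c/v) * ((1-v*v)*(1-v*v*T)*(1-c*c/(v*v))*(1-c*c*T/(v*v)))))"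
  proof -
    have lin3: "\<And>A u Y P w R B u' P' :: complex. A*(u*(Y*P) - w*(Y*R)) + B*(u'*(Y*P') - w*(Y*R)) = Y*(A*(u*P - w*R) + B*(u'*P' - w*R))"
      by (simp add: algebra_simps)
    show ?thesis unfolding D1_def Suc G GP GM by (rule lin3)
  qed
  also have "\<dots> = Y * (((1/(q*q*T) - 1)*(1 - al*al*q^5*T)/q + (1/q - 1)*(1 - al*al*(q*q))) * ((v - c/v) * ((1-v*v)*(1-v*v*T)*(1-c*c/(v*v))*(1-c*c*T/(v*v)))) + (-(1/(q*q*T) - 1)*(1 - al*al*(q*q)*T)*(1 - c*(q*q)*T)*(1 - c*q*T)/q) * ((v - c/v) * ((1-v*v)*(1-c*c/(v*v)))))"
    using rath[OF q c v d1 d2 d3 T] by simp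
  also have "\<dots> = lamh q al (Suc k) * hb q c (Suc k) v + muh q c al (Suc k) * hb q c k v"
  proof -
    have Tq: "T = q^(2*i+2)" unfolding T_def by (simp add: power_mult power2_eq_square)
    have p1: "(q*q)^(Suc (Suc i)) = q*q*T" unfolding T_def by simp
    have p2: "q^(2*Suc (Suc i)+3) = q^5*T" unfolding Tq power_add[symmetric] by simp
    have p3: "q^(2*Suc (Suc i)) = q*q*T" unfolding Tq by (simp add: power_add[symmetric])
    have p4: "q^(2*Suc (Suc i) - 1) = q*T" unfolding Tq by (simp add: power_add[symmetric])
    have L: "lamh q al (Suc (Suc i)) = (1/(q*q*T) - 1)*(1 - al*al*q^5*T)/q + (1/q - 1)*(1 - al*al*(q*q))"
      unfolding lamh_def p1 p2 by simp
    have M: "muh q c al (Suc (Suc i)) = -(1/(q*q*T) - 1)*(1 - al*al*(q*q)*T)*(1 - c*(q*q)*T)*(1 - c*q*T)/q"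
      unfolding muh_def p1 p3 p4 by (simp add: mult_ac)
    have lin: "\<And>Y a w P b Q :: complex. Y*(a*(w*P) + b*(w*Q)) = a*(w*(Y*P)) + b*(w*(Y*Q))" by (simp add: algebra_simps)
    show ?thesis unfolding Suc G G1 L M by (rule lin)
  qed
  finally show ?thesis .
qed



lemma D1_sum:
  "D1 q c al (\<lambda>v. \<Sum>k\<le>m. a k * G k v) v = (\<Sum>k\<le>m. a k * D1 q c al (G k) v)"
  unfolding D1_def
  by (simp add: algebra_simps sum.distrib sum_subtractf sum_distrib_left)

lemma eig_sum_aux:
  fixes a lam mu G dG :: "nat \<Rightarrow> complex" and Lam :: complex
  assumes rec: "\<And>k. k < m \<Longrightarrow> a k * lam k + a (Suc k) * mu (Suc k) = Lam * a k"
    and d0: "dG 0 = lam 0 * G 0"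
    and dS: "\<And>k. dG (Suc k) = lam (Suc k) * G (Suc k) + mu (Suc k) * G k"
  shows "n \<le> m \<Longrightarrow> (\<Sum>k\<le>n. a k * dG k) = Lam * (\<Sum>k<n. a k * G k) + a n * lam n * G n"
proof (induction n)
  case 0
  then show ?case using d0 by simp
next
  case (Suc n)
  then have IH: "(\<Sum>k\<le>n. a k * dG k) = Lam * (\<Sum>k<n. a k * G k) + a n * lam n * G n" by simp
  have r: "a n * lam n + a (Suc n) * mu (Suc n) = Lam * a n" using rec Suc.prems by simp
  have "(\<Sum>k\<le>Suc n. a k * dG k) = Lam * (\<Sum>k<n. a k * G k) + a n * lam n * G n + a (Suc n) * (lam (Suc n) * G (Suc n) + mu (Suc n) * G n)"
    using IH dS by simp
  also have "\<dots> = Lam * (\<Sum>k<n. a k * G k) + (a n * lam n + a (Suc n) * mu (Suc n)) * G n + a (Suc n) * lam (Suc n) * G (Suc n)"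
    by (simp add: algebra_simps)
  also have "\<dots> = Lam * (\<Sum>k<Suc n. a k * G k) + a (Suc n) * lam (Suc n) * G (Suc n)"
    unfolding r by (simp add: algebra_simps)
  finally show ?case .
qed

lemma eig_sum:
  fixes a lam mu G dG :: "nat \<Rightarrow> complex" and Lam :: complex
  assumes rec: "\<And>k. k < m \<Longrightarrow> a k * lam k + a (Suc k) * mu (Suc k) = Lam * a k"
    and d0: "dG 0 = lam 0 * G 0"
    and dS: "\<And>k. dG (Suc k) = lam (Suc k) * G (Suc k) + mu (Suc k) * G k"
    and lm: "lam m = Lam"
  shows "(\<Sum>k\<le>m. a k * dG k) = Lam * (\<Sum>k\<le>m. a k * G k)"
proof -
  have "(\<Sum>k\<le>m. a k * dG k) = Lam * (\<Sum>k<m. a k * G k) + a m * lam m * G m"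
    by (rule eig_sum_aux[OF rec d0 dS]) auto
  also have "\<dots> = Lam * (\<Sum>k\<le>m. a k * G k)"
    by (simp add: lm lessThan_Suc_atMost[symmetric] algebra_simps)
  finally show ?thesis .
qed


definition aL :: "complex \<Rightarrow> complex \<Rightarrow> complex \<Rightarrow> complex \<Rightarrow> nat \<Rightarrow> nat \<Rightarrow> complex" where
  "aL q c al a2 m k = (qpoch (inverse (q^m)) q k * qpoch a2 q k) /
      (qpoch (q*al) q k * qpoch (-(q*al)) q k * qpoch c q k * qpoch q q k) * q^k"

lemma frac_split:
  fixes A1 a1 A2 a2 B1 b1 B2 b2 B3 b3 B4 b4 z w :: complex
  shows "(A1*a1*(A2*a2))/(B1*b1*(B2*b2)*(B3*b3)*(B4*b4)) * (z*w) = (A1*A2)/(B1*B2*B3*B4)*z * ((a1*a2)/(b1*b2*b3*b4)*w)"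
  by (simp add: divide_inverse inverse_mult_distrib mult_ac)

lemma lin4:
  fixes x l r mu L :: complex
  assumes "l + r*mu = L"
  shows "x*l + (x*r)*mu = L*x"
proof -
  have "x*l + (x*r)*mu = x*(l + r*mu)" by (simp add: algebra_simps)
  then show ?thesis using assms by (simp add: mult.commute)
qed

lemma canc1:
  fixes X D1 D2 D3 D4 q y :: complex
  assumes "D1 \<noteq> 0" "D2 \<noteq> 0" "D3 \<noteq> 0" "D4 \<noteq> 0" "q \<noteq> 0" "y \<noteq> 0" and d4: "D4 = 1 - q*y"
  shows "X*q/(D1*D2*D3*D4) * (-(1/(q*y) - 1)*(D1*D2)*D3) = -X/y"
proof -
  have e: "1/(q*y) - 1 = D4/(q*y)" using assms by (simp add: field_simps)
  show ?thesis unfolding e using assms(1-6) by (simp add: field_simps)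
qed

lemma canc2:
  fixes X D1 D2 D3 D4 q y :: complex
  assumes "D1 \<noteq> 0" "D2 \<noteq> 0" "D3 \<noteq> 0" "D4 \<noteq> 0" "q \<noteq> 0" "y \<noteq> 0" and d4: "D4 = 1 - q*q*y"
  shows "X/(D1*D2*D3*D4)*(q*q) * (-(1/(q*q*y) - 1)*D1*D2*D3/q) = -X/(q*y)"
proof -
  have e: "1/(q*q*y) - 1 = D4/(q*q*y)" using assms by (simp add: field_simps)
  show ?thesis unfolding e using assms(1-6) by (simp add: field_simps)
qed

lemma recL_alg:
  fixes q al c y Z a2 :: complex
  assumes q: "q \<noteq> 0" and y: "y \<noteq> 0" and Z: "Z \<noteq> 0" and a2: "a2 = al*al*(q*Z)"
    and n1: "1 - q*al*y \<noteq> 0" and n2: "1 - -(q*al)*y \<noteq> 0" and n3: "1 - c*y \<noteq> 0" and n4: "1 - q*y \<noteq> 0"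
  shows "(1/y - 1)*(1 - al*al*(q*y)) + ((1 - 1/Z*y)*(1 - a2*y)*q / ((1 - q*al*y)*(1 - -(q*al)*y)*(1 - c*y)*(1 - q*y))) * (-(1/(q*y) - 1)*(1 - al*al*(q*q*(y*y)))*(1 - c*y)) = (1/Z - 1)*(1 - al*al*(q*Z))"
proof -
  have e: "1 - al*al*(q*q*(y*y)) = (1 - q*al*y)*(1 - -(q*al)*y)" by (simp add: algebra_simps)
  have h: "((1 - 1/Z*y)*(1 - a2*y)*q / ((1 - q*al*y)*(1 - -(q*al)*y)*(1 - c*y)*(1 - q*y))) * (-(1/(q*y) - 1)*(1 - al*al*(q*q*(y*y)))*(1 - c*y))
      = - ((1 - 1/Z*y)*(1 - a2*y))/y"
    unfolding e by (rule canc1[OF n1 n2 n3 n4 q y]) simp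
  show ?thesis unfolding h using y Z q by (simp add: divide_simps a2; algebra)
qed

lemma recL:
  fixes q c al a2 :: complex
  assumes q: "q \<noteq> 0" and a2: "a2 = al*al*(q*q^m)"
    and n1: "1 - q*al*q^k \<noteq> 0" and n2: "1 - -(q*al)*q^k \<noteq> 0" and n3: "1 - c*q^k \<noteq> 0" and n4: "1 - q*q^k \<noteq> 0"
  shows "aL q c al a2 m k * lam1 q al k + aL q c al a2 m (Suc k) * mu1 q c al (Suc k) = lam1 q al m * aL q c al a2 m k"
proof -
  have s: "aL q c al a2 m (Suc k) = aL q c al a2 m k * ((1 - inverse(q^m)*q^k)*(1 - a2*q^k)/((1 - q*al*q^k)*(1 - -(q*al)*q^k)*(1 - c*q^k)*(1 - q*q^k)) * q)"
    unfolding aL_def qpoch_Suc power_Suc2[of q k] by (rule frac_split)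
  have alg: "lam1 q al k + ((1 - inverse(q^m)*q^k)*(1 - a2*q^k)/((1 - q*al*q^k)*(1 - -(q*al)*q^k)*(1 - c*q^k)*(1 - q*q^k)) * q) * mu1 q c al (Suc k) = lam1 q al m"
  proof -
    have "(1/q^k - 1)*(1 - al*al*(q*q^k)) + ((1 - 1/q^m*q^k)*(1 - a2*q^k)*q / ((1 - q*al*q^k)*(1 - -(q*al)*q^k)*(1 - c*q^k)*(1 - q*q^k))) * (-(1/(q*q^k) - 1)*(1 - al*al*(q*q*(q^k*q^k)))*(1 - c*q^k)) = (1/q^m - 1)*(1 - al*al*(q*q^m))"
      by (rule recL_alg[OF q _ _ a2 n1 n2 n3 n4]) (use q in auto)
    moreover have p: "q^(2*Suc k) = q*q*(q^k*q^k)" unfolding mult_2 power_add by (simp add: mult_ac)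
    ultimately show ?thesis unfolding lam1_def mu1_def p by (simp add: divide_inverse mult_ac)
  qed
  show ?thesis unfolding s by (rule lin4[OF alg])
qed


definition cR :: "complex \<Rightarrow> complex \<Rightarrow> complex \<Rightarrow> complex \<Rightarrow> complex \<Rightarrow> nat \<Rightarrow> nat \<Rightarrow> complex" where
  "cR q a2 b1 b2 b3 n j = (qpoch (inverse ((q*q)^n)) (q*q) j * qpoch a2 (q*q) j) /
      (qpoch b1 (q*q) j * qpoch b2 (q*q) j * qpoch b3 (q*q) j * qpoch (q*q) (q*q) j) * (q*q)^j"

lemma recR_alg:
  fixes q al c y Z a2 :: complex
  assumes q: "q \<noteq> 0" and y: "y \<noteq> 0" and Z: "Z \<noteq> 0" and a2: "a2 = al*al*(q^3*Z)"
    and n1: "1 - q*q*(al*al)*y \<noteq> 0" and n2: "1 - q*q*c*y \<noteq> 0" and n3: "1 - q*c*y \<noteq> 0" and n4: "1 - q*q*y \<noteq> 0"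
  shows "((1/y - 1)*(1 - al*al*(q^3*y))/q + K) + ((1 - 1/Z*y)*(1 - a2*y)/((1 - q*q*(al*al)*y)*(1 - q*q*c*y)*(1 - q*c*y)*(1 - q*q*y)) * (q*q))
     * (-(1/(q*q*y) - 1)*(1 - al*al*(q*q*y))*(1 - c*(q*q*y))*(1 - c*(q*y))/q)
     = (1/Z - 1)*(1 - al*al*(q^3*Z))/q + K"
proof -
  have f: "(1 - al*al*(q*q*y)) = (1 - q*q*(al*al)*y)" "(1 - c*(q*q*y)) = (1 - q*q*c*y)" "(1 - c*(q*y)) = (1 - q*c*y)"
    by (simp_all add: mult_ac)
  have h: "((1 - 1/Z*y)*(1 - a2*y)/((1 - q*q*(al*al)*y)*(1 - q*q*c*y)*(1 - q*c*y)*(1 - q*q*y)) * (q*q))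
     * (-(1/(q*q*y) - 1)*(1 - al*al*(q*q*y))*(1 - c*(q*q*y))*(1 - c*(q*y))/q) = - ((1 - 1/Z*y)*(1 - a2*y))/(q*y)"
    unfolding f by (rule canc2[OF n1 n2 n3 n4 q y]) simp
  show ?thesis unfolding h using y Z q by (simp add: divide_simps a2; algebra)
qed

lemma recR:
  fixes q c al a2 b1 b2 b3 :: complex
  assumes q: "q \<noteq> 0" and a2: "a2 = al*al*(q^3*(q*q)^n)"
    and b1: "b1 = q*q*(al*al)" and b2: "b2 = q*q*c" and b3: "b3 = q*c"
    and n1: "1 - b1*(q*q)^j \<noteq> 0" and n2: "1 - b2*(q*q)^j \<noteq> 0" and n3: "1 - b3*(q*q)^j \<noteq> 0" and n4: "1 - q*q*(q*q)^j \<noteq> 0"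
  shows "cR q a2 b1 b2 b3 n j * lamh q al j + cR q a2 b1 b2 b3 n (Suc j) * muh q c al (Suc j) = lamh q al n * cR q a2 b1 b2 b3 n j"
proof -
  have s: "cR q a2 b1 b2 b3 n (Suc j) = cR q a2 b1 b2 b3 n j * ((1 - inverse((q*q)^n)*(q*q)^j)*(1 - a2*(q*q)^j)/((1 - b1*(q*q)^j)*(1 - b2*(q*q)^j)*(1 - b3*(q*q)^j)*(1 - q*q*(q*q)^j)) * (q*q))"
    unfolding cR_def qpoch_Suc power_Suc2[of "q*q" j] by (rule frac_split)
  have y: "(q*q)^j \<noteq> 0" "(q*q)^n \<noteq> 0" using q by auto
  have alg: "lamh q al j + ((1 - inverse((q*q)^n)*(q*q)^j)*(1 - a2*(q*q)^j)/((1 - b1*(q*q)^j)*(1 - b2*(q*q)^j)*(1 - b3*(q*q)^j)*(1 - q*q*(q*q)^j)) * (q*q)) * muh q c al (Suc j) = lamh q al n"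
  proof -
    have e1: "\<And>j. q^(2*j+3) = q^3*(q*q)^j" by (simp add: power_add power_mult power2_eq_square)
    have e2: "q^(2*Suc j) = q*q*(q*q)^j" by (simp add: power_mult power2_eq_square)
    have e3: "q^(2*Suc j - 1) = q*(q*q)^j"
    proof -
      have "2*Suc j - 1 = Suc (2*j)" by simp
      then show ?thesis by (simp add: power_mult power2_eq_square)
    qed
    have "((1/(q*q)^j - 1)*(1 - al*al*(q^3*(q*q)^j))/q + (1/q - 1)*(1 - al*al*(q*q))) + ((1 - 1/(q*q)^n*(q*q)^j)*(1 - a2*(q*q)^j)/((1 - q*q*(al*al)*(q*q)^j)*(1 - q*q*c*(q*q)^j)*(1 - q*c*(q*q)^j)*(1 - q*q*(q*q)^j)) * (q*q))
     * (-(1/(q*q*(q*q)^j) - 1)*(1 - al*al*(q*q*(q*q)^j))*(1 - c*(q*q*(q*q)^j))*(1 - c*(q*(q*q)^j))/q)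
     = (1/(q*q)^n - 1)*(1 - al*al*(q^3*(q*q)^n))/q + (1/q - 1)*(1 - al*al*(q*q))"
      by (rule recR_alg[OF q y(1) y(2) a2]) (use n1 n2 n3 n4 b1 b2 b3 in auto)
    then show ?thesis unfolding lamh_def muh_def e1 e2 e3 b1 b2 b3 by (simp add: divide_inverse)
  qed
  show ?thesis unfolding s by (rule lin4[OF alg])
qed


lemma eigL:
  fixes q c al v a2 :: complex
  assumes q: "q \<noteq> 0" and c: "c \<noteq> 0" and v: "v \<noteq> 0"
    and d1: "c + v*v \<noteq> 0" and d2: "c + q*(v*v) \<noteq> 0" and d3: "v*v + q*c \<noteq> 0"
    and a2: "a2 = al*al*(q*q^m)"
    and nz: "\<And>k. k < m \<Longrightarrow> 1 - q*al*q^k \<noteq> 0 \<and> 1 - -(q*al)*q^k \<noteq> 0 \<and> 1 - c*q^k \<noteq> 0 \<and> 1 - q*q^k \<noteq> 0"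
  shows "D1 q c al (\<lambda>v. \<Sum>k\<le>m. aL q c al a2 m k * gb q c k v) v = lam1 q al m * (\<Sum>k\<le>m. aL q c al a2 m k * gb q c k v)"
  unfolding D1_sum
proof (rule eig_sum[where mu = "mu1 q c al"])
  fix k assume "k < m"
  then show "aL q c al a2 m k * lam1 q al k + aL q c al a2 m (Suc k) * mu1 q c al (Suc k) = lam1 q al m * aL q c al a2 m k"
    using nz[of k] by (intro recL[OF q a2]) auto
next
  show "D1 q c al (gb q c 0) v = lam1 q al 0 * gb q c 0 v" unfolding D1_def gb_def lam1_def by simp
next
  fix k show "D1 q c al (gb q c (Suc k)) v = lam1 q al (Suc k) * gb q c (Suc k) v + mu1 q c al (Suc k) * gb q c k v"
    by (rule basis_g[OF q c v d1 d2 d3])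
qed simp

lemma eigR:
  fixes q c al v a2 b1 b2 b3 :: complex
  assumes q: "q \<noteq> 0" and c: "c \<noteq> 0" and v: "v \<noteq> 0"
    and d1: "c + v*v \<noteq> 0" and d2: "c + q*(v*v) \<noteq> 0" and d3: "v*v + q*c \<noteq> 0"
    and a2: "a2 = al*al*(q^3*(q*q)^n)"
    and b1: "b1 = q*q*(al*al)" and b2: "b2 = q*q*c" and b3: "b3 = q*c"
    and nz: "\<And>j. j < n \<Longrightarrow> 1 - b1*(q*q)^j \<noteq> 0 \<and> 1 - b2*(q*q)^j \<noteq> 0 \<and> 1 - b3*(q*q)^j \<noteq> 0 \<and> 1 - q*q*(q*q)^j \<noteq> 0"
  shows "D1 q c al (\<lambda>v. \<Sum>j\<le>n. cR q a2 b1 b2 b3 n j / (1-c) * hb q c j v) v = lamh q al n * (\<Sum>j\<le>n. cR q a2 b1 b2 b3 n j / (1-c) * hb q c j v)"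
  unfolding D1_sum
proof (rule eig_sum[where mu = "muh q c al"])
  fix k assume k: "k < n"
  have "cR q a2 b1 b2 b3 n k * lamh q al k + cR q a2 b1 b2 b3 n (Suc k) * muh q c al (Suc k) = lamh q al n * cR q a2 b1 b2 b3 n k"
    using nz[OF k] by (intro recR[OF q a2 b1 b2 b3]) auto
  then have "(cR q a2 b1 b2 b3 n k * lamh q al k + cR q a2 b1 b2 b3 n (Suc k) * muh q c al (Suc k)) / (1-c) = lamh q al n * cR q a2 b1 b2 b3 n k / (1-c)"
    by simp
  then show "cR q a2 b1 b2 b3 n k / (1-c) * lamh q al k + cR q a2 b1 b2 b3 n (Suc k) / (1-c) * muh q c al (Suc k) = lamh q al n * (cR q a2 b1 b2 b3 n k / (1-c))"
    by (simp add: add_divide_distrib mult_ac)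
next
  show "D1 q c al (hb q c 0) v = lamh q al 0 * hb q c 0 v" by (rule basis_h0[OF q c v d1 d2 d3])
next
  fix k show "D1 q c al (hb q c (Suc k)) v = lamh q al (Suc k) * hb q c (Suc k) v + muh q c al (Suc k) * hb q c k v"
    by (rule basis_h[OF q c v d1 d2 d3])
qed simp

lemma lam_eq: "q \<noteq> 0 \<Longrightarrow> lamh q al n = lam1 q al (2*n+1)"
  unfolding lamh_def lam1_def
proof -
  assume q: "q \<noteq> 0"
  define Z where "Z = q^(2*n)"
  have Z: "Z \<noteq> 0" using q by (simp add: Z_def)
  have e1: "(q*q)^n = Z" unfolding Z_def by (simp add: power_mult power2_eq_square)
  have e2: "q^(2*n+3) = q^3*Z" unfolding Z_def by (simp add: power_add)
  have e3: "q^(2*n+1) = q*Z" unfolding Z_def by simp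
  have e4: "q^(2*n+1+1) = q*q*Z" unfolding Z_def by simp
  show "(1 / (q * q) ^ n - 1) * (1 - al * al * q ^ (2 * n + 3)) / q + (1 / q - 1) * (1 - al * al * (q * q)) =
    (1 / q ^ (2 * n + 1) - 1) * (1 - al * al * q ^ (2 * n + 1 + 1))"
    unfolding e1 e2 e3 e4 using q Z by (simp add: divide_simps; algebra)
qed



lemma poly_zero_many_roots:
  fixes p :: "complex poly" and u :: "nat \<Rightarrow> complex"
  assumes deg: "degree p \<le> d" and inj: "inj_on u {..d}" and r: "\<And>j. j \<le> d \<Longrightarrow> poly p (u j) = 0"
  shows "p = 0"
proof (rule ccontr)
  assume p: "p \<noteq> 0"
  have sub: "u ` {..d} \<subseteq> {x. poly p x = 0}" using r by auto
  have fin: "finite {x. poly p x = 0}" using poly_roots_finite[OF p] .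
  have "Suc d = card (u ` {..d})" using card_image[OF inj] by simp
  also have "\<dots> \<le> card {x. poly p x = 0}" by (rule card_mono[OF fin sub])
  also have "\<dots> \<le> degree p" by (rule card_poly_roots_bound[OF p])
  finally show False using deg by simp
qed

definition gpoly :: "complex \<Rightarrow> complex \<Rightarrow> nat \<Rightarrow> complex poly" where
  "gpoly q c k = (\<Prod>i<k. [:1 - c*(q^i*q^i), -(q^i):])"

definition hpoly :: "complex \<Rightarrow> complex \<Rightarrow> nat \<Rightarrow> complex poly" where
  "hpoly q c k = [:0,1:] * (\<Prod>i<k. [:1 + c*c*((q*q)^i*(q*q)^i) - 2*c*(q*q)^i, 0, -((q*q)^i):])"

lemma deg1: "degree [:a, b:] \<le> 1"
  by (rule order_trans[OF degree_pCons_le]) simp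

lemma deg2: "degree [:a, b, d:] \<le> 2"
  by (rule order_trans[OF degree_pCons_le]) (use deg1[of b d] in simp)

lemma gb_poly:
  assumes v: "v \<noteq> 0"
  shows "gb q c k v = poly (gpoly q c k) (v - c/v)"
proof -
  have f: "\<And>i. (1 - v*q^i)*(1 - -(c/v)*q^i) = poly [:1 - c*(q^i*q^i), -(q^i):] (v - c/v)"
    using v by (simp add: divide_simps; algebra)
  have "gb q c k v = (\<Prod>i<k. (1 - v*q^i)*(1 - -(c/v)*q^i))"
    unfolding gb_def qpoch_def prod.distrib ..
  also have "\<dots> = (\<Prod>i<k. poly [:1 - c*(q^i*q^i), -(q^i):] (v - c/v))" by (simp only: f)
  also have "\<dots> = poly (gpoly q c k) (v - c/v)" unfolding gpoly_def poly_prod ..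
  finally show ?thesis .
qed

lemma hb_poly:
  assumes v: "v \<noteq> 0"
  shows "hb q c k v = poly (hpoly q c k) (v - c/v)"
proof -
  have f: "\<And>i. (1 - v*v*(q*q)^i)*(1 - c*c/(v*v)*(q*q)^i) = poly [:1 + c*c*((q*q)^i*(q*q)^i) - 2*c*(q*q)^i, 0, -((q*q)^i):] (v - c/v)"
    using v by (simp add: divide_simps; algebra)
  have "hb q c k v = (v - c/v) * (\<Prod>i<k. (1 - v*v*(q*q)^i)*(1 - c*c/(v*v)*(q*q)^i))"
    unfolding hb_def qpoch_def prod.distrib ..
  also have "\<dots> = (v - c/v) * (\<Prod>i<k. poly [:1 + c*c*((q*q)^i*(q*q)^i) - 2*c*(q*q)^i, 0, -((q*q)^i):] (v - c/v))" by (simp only: f)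
  also have "\<dots> = poly (hpoly q c k) (v - c/v)" unfolding hpoly_def poly_prod poly_mult by simp
  finally show ?thesis .
qed

lemma degree_gpoly: "degree (gpoly q c k) \<le> k"
proof -
  have "degree (gpoly q c k) \<le> sum (degree \<circ> (\<lambda>i. [:1 - c*(q^i*q^i), -(q^i):])) {..<k}"
    unfolding gpoly_def by (rule degree_prod_sum_le) simp
  also have "\<dots> \<le> (\<Sum>i<k. 1)" by (rule sum_mono) (unfold o_def, rule deg1)
  finally show ?thesis by simp
qed

lemma degree_hpoly: "degree (hpoly q c k) \<le> 2*k+1"
proof -
  have "degree (\<Prod>i<k. [:1 + c*c*((q*q)^i*(q*q)^i) - 2*c*(q*q)^i, 0, -((q*q)^i):]) \<le> sum (degree \<circ> (\<lambda>i. [:1 + c*c*((q*q)^i*(q*q)^i) - 2*c*(q*q)^i, 0, -((q*q)^i):])) {..<k}"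
    by (rule degree_prod_sum_le) simp
  also have "\<dots> \<le> (\<Sum>i<k. 2)" by (rule sum_mono) (unfold o_def, rule deg2)
  finally have P: "degree (\<Prod>i<k. [:1 + c*c*((q*q)^i*(q*q)^i) - 2*c*(q*q)^i, 0, -((q*q)^i):]) \<le> 2*k" by simp
  have "degree (hpoly q c k) \<le> degree [:0::complex,1:] + 2*k"
    unfolding hpoly_def using degree_mult_le P by (meson add_le_mono le_refl order_trans)
  also have "degree [:0::complex,1:] \<le> 1" by (rule deg1)
  finally show ?thesis by simp
qed



lemma cq_ne:
  fixes q :: real
  assumes q0: "0 < q" and q1: "q < 1" and i: "i \<noteq> M+1"
  shows "(of_real (inverse (q^(M+1))) :: complex) * of_real q ^ i \<noteq> 1"
proof
  assume "(of_real (inverse (q^(M+1))) :: complex) * of_real q ^ i = 1"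
  then have "of_real (inverse (q^(M+1)) * q^i) = (1::complex)" by simp
  then have "inverse (q^(M+1)) * q^i = 1" using of_real_eq_1_iff by blast
  then have "q^i = q^(M+1)" using q0 by (simp add: field_simps)
  moreover have "q^i \<noteq> q^(M+1)"
  proof (cases "i < M+1")
    case True then have "q^(M+1) < q^i" using q0 q1 power_strict_decreasing by blast
    then show ?thesis by simp
  next
    case False then have "M+1 < i" using i by simp
    then have "q^i < q^(M+1)" using q0 q1 power_strict_decreasing by blast
    then show ?thesis by simp
  qed
  ultimately show False by simp
qed

lemma qpow_ne1:
  fixes q :: real
  assumes q0: "0 < q" and q1: "q < 1"
  shows "(of_real q :: complex) * of_real q ^ k \<noteq> 1"
proof
  assume "(of_real q :: complex) * of_real q ^ k = 1"
  then have "of_real (q^Suc k) = (1::complex)" by simp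
  then have "q^Suc k = 1" using of_real_eq_1_iff by blast
  moreover have "q^Suc k < 1" using power_Suc_less_one[OF q0 q1] .
  ultimately show False by simp
qed

lemma ne_inv:
  fixes x y :: complex
  assumes "x \<noteq> inverse y" "y \<noteq> 0"
  shows "1 - x*y \<noteq> 0"
proof
  assume "1 - x*y = 0"
  then have "y * x = 1" by (simp add: algebra_simps)
  then have "inverse y = x" by (rule inverse_unique)
  then show False using assms by simp
qed


lemma core:
  fixes q :: real and M n :: nat and al v :: complex
  assumes q0: "0 < q" and q1: "q < 1" and nM: "2*n \<le> M"
    and h1: "\<forall>j::nat. of_real q * al \<noteq> inverse (of_real q ^ j)"
    and h2: "\<forall>j::nat. - (of_real q * al) \<noteq> inverse (of_real q ^ j)"
    and h3: "\<forall>j::nat. (of_real q)\<^sup>2 * al\<^sup>2 \<noteq> inverse (of_real q ^ j)"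
    and v: "v \<noteq> 0"
  shows "(\<Sum>k\<le>2*n+1. aL (of_real q) (of_real (inverse (q^(M+1)))) al (al*al*(of_real q*of_real q^(2*n+1))) (2*n+1) k * gb (of_real q) (of_real (inverse (q^(M+1)))) k v)
       = (\<Sum>j\<le>n. cR (of_real q) (al*al*(of_real q^3*(of_real q*of_real q)^n)) (of_real q*of_real q*(al*al)) (of_real q*of_real q*of_real (inverse (q^(M+1)))) (of_real q*of_real (inverse (q^(M+1)))) n j / (1-of_real (inverse (q^(M+1)))) * hb (of_real q) (of_real (inverse (q^(M+1)))) j v)"
proof -
  define Q :: complex where "Q = of_real q"
  define cr where "cr = inverse (q^(M+1))"
  define c :: complex where "c = of_real cr"
  define m where "m = 2*n+1"
  define a2 where "a2 = al*al*(Q*Q^m)"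
  define a2' where "a2' = al*al*(Q^3*(Q*Q)^n)"
  define b1 where "b1 = Q*Q*(al*al)"
  define b2 where "b2 = Q*Q*c"
  define b3 where "b3 = Q*c"
  define Lf where "Lf = (\<lambda>v. \<Sum>k\<le>m. aL Q c al a2 m k * gb Q c k v)"
  define Rf where "Rf = (\<lambda>v. \<Sum>j\<le>n. cR Q a2' b1 b2 b3 n j / (1-c) * hb Q c j v)"
  define E where "E = (\<lambda>v. Lf v - Rf v)"
  have Q: "Q \<noteq> 0" using q0 by (simp add: Q_def)
  have cr0: "0 < cr" using q0 by (simp add: cr_def)
  have cr1: "1 < cr"
  proof -
    have "q^Suc M < 1" by (rule power_Suc_less_one[OF q0 q1])
    moreover have "0 < q^Suc M" using q0 by simp
    ultimately have "1 < inverse (q^Suc M)" by (rule one_less_inverse[rotated])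
    then show ?thesis unfolding cr_def by simp
  qed
  have c: "c \<noteq> 0" using cr0 by (simp add: c_def)
  have c1: "1 - c \<noteq> 0" using cr1 by (simp add: c_def)
  have cQ: "\<And>i. i \<noteq> M+1 \<Longrightarrow> 1 - c*Q^i \<noteq> 0"
    using cq_ne[OF q0 q1] unfolding c_def cr_def Q_def by force
  have QQ: "\<And>k. 1 - Q*Q^k \<noteq> 0" using qpow_ne1[OF q0 q1] unfolding Q_def by force
  have H1: "\<And>k. 1 - Q*al*Q^k \<noteq> 0" using h1 Q by (intro ne_inv) (auto simp: Q_def)
  have H2: "\<And>k. 1 - -(Q*al)*Q^k \<noteq> 0" using h2 Q by (intro ne_inv) (auto simp: Q_def)
  have H3: "\<And>j. 1 - Q*Q*(al*al)*(Q*Q)^j \<noteq> 0"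
  proof -
    fix j
    have "(Q*Q)^j = Q^(2*j)" by (simp add: power_mult power2_eq_square)
    moreover have "Q*Q*(al*al) \<noteq> inverse (Q^(2*j))" using h3 unfolding Q_def power2_eq_square by (simp add: mult_ac)
    ultimately show "1 - Q*Q*(al*al)*(Q*Q)^j \<noteq> 0" using Q by (intro ne_inv) auto
  qed
  define vv where "vv = (\<lambda>j::nat. inverse (Q^j))"
  have vvr: "\<And>j. vv j = of_real (inverse (q^j))" unfolding vv_def Q_def by simp
  have vv0: "\<And>j. vv j \<noteq> 0" unfolding vv_def using Q by simp
  have dc: "\<And>j. c + vv j * vv j \<noteq> 0 \<and> c + Q*(vv j * vv j) \<noteq> 0 \<and> vv j * vv j + Q*c \<noteq> 0"
  proof -
    fix j
    have p: "0 < inverse (q^j)" using q0 by simp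
    have "c + vv j * vv j = of_real (cr + inverse (q^j) * inverse (q^j))" unfolding c_def vvr by simp
    moreover have "0 < cr + inverse (q^j) * inverse (q^j)" using cr0 p by (simp add: add_pos_pos)
    moreover have "c + Q*(vv j * vv j) = of_real (cr + q*(inverse (q^j) * inverse (q^j)))" unfolding c_def vvr Q_def by simp
    moreover have "0 < cr + q*(inverse (q^j) * inverse (q^j))" using cr0 p q0 by (simp add: add_pos_pos)
    moreover have "vv j * vv j + Q*c = of_real (inverse (q^j) * inverse (q^j) + q*cr)" unfolding c_def vvr Q_def by simp
    moreover have "0 < inverse (q^j) * inverse (q^j) + q*cr" using cr0 p q0 by (simp add: add_pos_pos)
    ultimately show "c + vv j * vv j \<noteq> 0 \<and> c + Q*(vv j * vv j) \<noteq> 0 \<and> vv j * vv j + Q*c \<noteq> 0"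
      by (metis of_real_eq_0_iff order_less_irrefl)
  qed
  have eig: "\<And>j. D1 Q c al E (vv j) = lam1 Q al m * E (vv j)"
  proof -
    fix j
    have d1: "c + vv j * vv j \<noteq> 0" and d2: "c + Q*(vv j * vv j) \<noteq> 0" and d3: "vv j * vv j + Q*c \<noteq> 0"
      using dc[of j] by auto
    have eL: "D1 Q c al Lf (vv j) = lam1 Q al m * Lf (vv j)"
      unfolding Lf_def
    proof (rule eigL[OF Q c vv0 d1 d2 d3 a2_def])
      fix k assume k: "k < m"
      then have "k \<noteq> M+1" using nM unfolding m_def by simp
      then show "1 - Q*al*Q^k \<noteq> 0 \<and> 1 - -(Q*al)*Q^k \<noteq> 0 \<and> 1 - c*Q^k \<noteq> 0 \<and> 1 - Q*Q^k \<noteq> 0"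
        using H1 H2 cQ QQ by auto
    qed
    have eR: "D1 Q c al Rf (vv j) = lamh Q al n * Rf (vv j)"
      unfolding Rf_def
    proof (rule eigR[OF Q c vv0 d1 d2 d3 a2'_def b1_def b2_def b3_def])
      fix i assume i: "i < n"
      have pw: "(Q*Q)^i = Q^(2*i)" by (simp add: power_mult power2_eq_square)
      have e2: "b2*(Q*Q)^i = c*Q^(2*i+2)" unfolding b2_def pw power_add by (simp add: power2_eq_square mult_ac)
      have e3: "b3*(Q*Q)^i = c*Q^(2*i+1)" unfolding b3_def pw power_add by (simp add: mult_ac)
      have e4: "Q*Q*(Q*Q)^i = Q*Q^(2*i+1)" unfolding pw power_add by (simp add: mult_ac)
      have "2*i+2 \<noteq> M+1" "2*i+1 \<noteq> M+1" using i nM by auto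
      then have n2: "1 - c*Q^(2*i+2) \<noteq> 0" and n3: "1 - c*Q^(2*i+1) \<noteq> 0" using cQ by blast+
      show "1 - b1*(Q*Q)^i \<noteq> 0 \<and> 1 - b2*(Q*Q)^i \<noteq> 0 \<and> 1 - b3*(Q*Q)^i \<noteq> 0 \<and> 1 - Q*Q*(Q*Q)^i \<noteq> 0"
        unfolding e2 e3 e4 b1_def using H3[of i] n2 n3 QQ[of "2*i+1"] by blast
    qed
    have lin: "D1 Q c al E (vv j) = D1 Q c al Lf (vv j) - D1 Q c al Rf (vv j)"
      unfolding D1_def E_def by (simp add: algebra_simps)
    show "D1 Q c al E (vv j) = lam1 Q al m * E (vv j)"
      unfolding lin eL eR lam_eq[OF Q] m_def[symmetric] by (simp add: E_def algebra_simps)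
  qed
  have L1: "Lf 1 = 1"
  proof -
    have z: "\<And>k. gb Q c (Suc k) 1 = 0" unfolding gb_def by (simp add: qpoch_S1)
    show ?thesis unfolding Lf_def lessThan_Suc_atMost[symmetric] sum.lessThan_Suc_shift z
      by (simp add: aL_def gb_def)
  qed
  have R1: "Rf 1 = 1"
  proof -
    have z: "\<And>k. hb Q c (Suc k) 1 = 0" unfolding hb_def by (simp add: qpoch_S1)
    have "Rf 1 = cR Q a2' b1 b2 b3 n 0 / (1-c) * hb Q c 0 1"
      unfolding Rf_def lessThan_Suc_atMost[symmetric] sum.lessThan_Suc_shift z by simp
    also have "\<dots> = 1" using c1 by (simp add: cR_def hb_def)
    finally show ?thesis .
  qed
  have A1at1: "A1 Q c al 1 = 0" unfolding A1_def by simp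
  have A1nz: "\<And>i. i \<le> 2*n \<Longrightarrow> A1 Q c al (-(c/vv i)) \<noteq> 0"
  proof -
    fix i assume i: "i \<le> 2*n"
    have d1: "c + vv i * vv i \<noteq> 0" and d3: "vv i * vv i + Q*c \<noteq> 0" using dc[of i] by auto
    have n1: "vv i * vv i - c*c \<noteq> 0"
    proof -
      have "vv i * vv i - c*c = (vv i - c)*(vv i + c)" by (simp add: algebra_simps)
      moreover have "vv i + c \<noteq> 0"
      proof -
        have "vv i + c = of_real (inverse (q^i) + cr)" unfolding vvr c_def by simp
        moreover have "0 < inverse (q^i) + cr" using q0 cr0 by (simp add: add_pos_pos)
        ultimately show ?thesis by (metis of_real_eq_0_iff order_less_irrefl)
      qed
      moreover have "vv i - c \<noteq> 0"
      proof -
        have "i \<noteq> M+1" using i nM by simp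
        then have "1 - c*Q^i \<noteq> 0" by (rule cQ)
        moreover have "vv i - c = (1 - c*Q^i) * vv i" unfolding vv_def using Q by (simp add: field_simps)
        ultimately show ?thesis using vv0[of i] by simp
      qed
      ultimately show ?thesis by simp
    qed
    have n2: "vv i * vv i - Q*Q*(al*al) \<noteq> 0"
    proof -
      have "vv i * vv i - Q*Q*(al*al) = (1 - Q*al*Q^i)*(1 - -(Q*al)*Q^i) * (vv i * vv i)"
        unfolding vv_def using Q by (simp add: field_simps)
      then show ?thesis using H1[of i] H2[of i] vv0[of i] by simp
    qed
    show "A1 Q c al (-(c/vv i)) \<noteq> 0"
      unfolding A1_eq'[OF c vv0 d1 d3] using n1 n2 d1 d3 by simp
  qed
  have shift1: "\<And>j. Q * vv (Suc j) = vv j" unfolding vv_def using Q by (simp add: field_simps)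
  have shift2: "\<And>j. vv j / Q = vv (Suc j)" unfolding vv_def using Q by (simp add: field_simps)
  have E1: "E (vv 0) = 0" unfolding vv_def E_def using L1 R1 by simp
  have chain: "\<And>j. j \<le> 2*n \<Longrightarrow> E (vv j) = 0 \<and> E (vv (Suc j)) = 0"
  proof -
    fix j show "j \<le> 2*n \<Longrightarrow> E (vv j) = 0 \<and> E (vv (Suc j)) = 0"
    proof (induction j)
      case 0
      have "D1 Q c al E (vv 0) = lam1 Q al m * E (vv 0)" by (rule eig)
      then have "A1 Q c al (-(c/vv 0)) * E (vv (Suc 0)) = 0"
        unfolding D1_def E1 using A1at1 shift2[of 0] by (simp add: vv_def)
      then show ?case using A1nz[of 0] E1 by simp
    next
      case (Suc j)
      then have IH: "E (vv j) = 0" "E (vv (Suc j)) = 0" by auto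
      have "D1 Q c al E (vv (Suc j)) = lam1 Q al m * E (vv (Suc j))" by (rule eig)
      then have "A1 Q c al (-(c/vv (Suc j))) * E (vv (Suc (Suc j))) = 0"
        unfolding D1_def shift1 shift2 IH by simp
      then show ?case using A1nz[OF Suc.prems] IH by simp
    qed
  qed
  have Ez: "\<And>j. j \<le> 2*n+1 \<Longrightarrow> E (vv j) = 0"
  proof -
    fix j assume j: "j \<le> 2*n+1"
    show "E (vv j) = 0"
    proof (cases j)
      case 0 then show ?thesis using E1 by simp
    next
      case (Suc i) then show ?thesis using chain[of i] j by simp
    qed
  qed
  define PL where "PL = (\<Sum>k\<le>m. smult (aL Q c al a2 m k) (gpoly Q c k))"
  define PR where "PR = (\<Sum>j\<le>n. smult (cR Q a2' b1 b2 b3 n j / (1-c)) (hpoly Q c j))"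
  have Epoly: "\<And>w. w \<noteq> 0 \<Longrightarrow> E w = poly (PL - PR) (w - c/w)"
    unfolding E_def Lf_def Rf_def PL_def PR_def poly_diff poly_sum poly_smult
    by (simp add: gb_poly hb_poly)
  have degP: "degree (PL - PR) \<le> 2*n+1"
  proof -
    have "degree PL \<le> 2*n+1" unfolding PL_def
      by (rule degree_sum_le) (auto intro: order_trans[OF degree_smult_le] order_trans[OF degree_gpoly] simp: m_def)
    moreover have "degree PR \<le> 2*n+1" unfolding PR_def
      by (rule degree_sum_le) (auto intro: order_trans[OF degree_smult_le] order_trans[OF degree_hpoly])
    ultimately show ?thesis using degree_diff_le_max[of PL PR] by simp
  qed
  define u where "u = (\<lambda>j. vv j - c / vv j)"
  have ur: "\<And>j. u j = of_real (inverse (q^j) - cr * q^j)"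
    unfolding u_def vvr c_def by (simp add: divide_inverse)
  have inj: "inj_on u {..2*n+1}"
  proof (rule linorder_inj_onI')
    fix i j :: nat assume ij: "i < j"
    have "q^j < q^i" using ij q0 q1 power_strict_decreasing by blast
    then have a: "inverse (q^i) < inverse (q^j)" using q0 by (simp add: less_imp_inverse_less)
    have b: "cr * q^j < cr * q^i" using \<open>q^j < q^i\<close> cr0 by simp
    have "inverse (q^i) - cr * q^i < inverse (q^j) - cr * q^j" using a b by simp
    then show "u i \<noteq> u j" unfolding ur by (metis of_real_eq_iff order_less_irrefl)
  qed
  have "PL - PR = 0"
  proof (rule poly_zero_many_roots[OF degP inj])
    fix j assume "j \<le> 2*n+1"
    then show "poly (PL - PR) (u j) = 0" using Ez[of j] Epoly[OF vv0[of j]] unfolding u_def by simp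
  qed
  then have "E v = 0" using Epoly[OF v] by simp
  then show ?thesis unfolding E_def Lf_def Rf_def m_def a2_def a2'_def b1_def b2_def b3_def c_def cr_def Q_def by simp
qed



lemma cq_add: "cqpow q (a + b) = cqpow q a * cqpow q b"
  unfolding cqpow_def by (simp add: distrib_right exp_add)

lemma cq_nat: assumes "0 < q" shows "cqpow q (of_nat k) = (of_real q)^k"
proof -
  have "exp (of_real (ln q) :: complex) = of_real q"
    using assms by (simp only: exp_of_real exp_ln)
  then show ?thesis unfolding cqpow_def by (simp add: exp_of_nat_mult)
qed

lemma cq_neg: "cqpow q (- z) = inverse (cqpow q z)"
  unfolding cqpow_def by (simp add: exp_minus)

lemma cq_nz: "cqpow q z \<noteq> 0" unfolding cqpow_def by simp

theorem mainTheorem8: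
  fixes q :: real and M n :: nat and \<alpha> x :: complex
  assumes q0: "0 < q" and q1: "q < 1"
    and M1: "1 \<le> M"
    and nle: "n \<le> M div 2"
    and h1: "\<forall>j::nat. of_real q * \<alpha> \<noteq> inverse (of_real q ^ j)"
    and h2: "\<forall>j::nat. - (of_real q * \<alpha>) \<noteq> inverse (of_real q ^ j)"
    and h3: "\<forall>j::nat. (of_real q)\<^sup>2 * \<alpha>\<^sup>2 \<noteq> inverse (of_real q ^ j)"
  shows "(let Q = (of_real q :: complex); N = (of_real (real M / 2) :: complex) in
      phi43_term (2*n+1) (\<alpha>\<^sup>2 * Q ^ (2*n+2)) (cqpow q (- x - N - 1/2)) (- cqpow q (x - N - 1/2))
         (Q * \<alpha>) (- (Q * \<alpha>)) (cqpow q (- 2*N - 1)) Q Q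
      = (cqpow q (- x - N - 1/2) - cqpow q (x - N - 1/2)) / (1 - cqpow q (- 2*N - 1))
        * phi43_term n (\<alpha>\<^sup>2 * Q ^ (2*n+3)) (cqpow q (- 2*x - 2*N - 1)) (cqpow q (2*x - 2*N - 1))
            (Q\<^sup>2 * \<alpha>\<^sup>2) (cqpow q (- 2*N + 1)) (cqpow q (- 2*N)) (Q\<^sup>2) (Q\<^sup>2))"
proof -
  define Q :: complex where "Q = of_real q"
  define N :: complex where "N = of_real (real M / 2)"
  define a where "a = cqpow q (- x - N - 1/2)"
  define c where "c = cqpow q (- 2*N - 1)"
  have a0: "a \<noteq> 0" unfolding a_def by (rule cq_nz)
  have N2: "2*N = of_nat M" unfolding N_def by simp
  have cM: "c = of_real (inverse (q^(M+1)))"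
  proof -
    have "- 2*N - 1 = - of_nat (M+1)" using N2 by (simp add: algebra_simps)
    then have "c = cqpow q (- of_nat (M+1))" unfolding c_def by (rule arg_cong)
    then have "c = inverse (cqpow q (of_nat (M+1)))" by (simp only: cq_neg)
    also have "\<dots> = of_real (inverse (q^(M+1)))" unfolding cq_nat[OF q0, of "M+1"] by simp
    finally show ?thesis .
  qed
  have r1: "cqpow q (x - N - 1/2) = c/a"
  proof -
    have ex: "(x - N - 1/2) + (- x - N - 1/2) = - 2*N - 1" by (simp add: field_simps)
    have "cqpow q (x - N - 1/2) * a = c" unfolding a_def c_def cq_add[symmetric] ex ..
    then show ?thesis using a0 by (simp add: field_simps)
  qed
  have r2: "cqpow q (- 2*x - 2*N - 1) = a*a"
  proof -
    have ex: "- 2*x - 2*N - 1 = (- x - N - 1/2) + (- x - N - 1/2)" by (simp add: field_simps)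
    show ?thesis unfolding a_def ex cq_add ..
  qed
  have r3: "cqpow q (2*x - 2*N - 1) = c*c/(a*a)"
  proof -
    have ex: "(2*x - 2*N - 1) + ((- x - N - 1/2) + (- x - N - 1/2)) = (- 2*N - 1) + (- 2*N - 1)" by (simp add: field_simps)
    have "cqpow q (2*x - 2*N - 1) * (a*a) = c*c" unfolding a_def c_def cq_add[symmetric] ex ..
    then show ?thesis using a0 by (simp add: field_simps)
  qed
  have Q2: "cqpow q 2 = Q*Q" using cq_nat[OF q0, of 2] unfolding Q_def by (simp add: power2_eq_square)
  have Q1: "cqpow q 1 = Q" using cq_nat[OF q0, of 1] unfolding Q_def by simp
  have r4: "cqpow q (- 2*N + 1) = Q*Q*c"
  proof -
    have ex: "- 2*N + 1 = 2 + (- 2*N - 1)" by (simp add: field_simps)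
    have "cqpow q (- 2*N + 1) = cqpow q (2 + (- 2*N - 1))" unfolding ex ..
    then show ?thesis unfolding cq_add Q2 c_def .
  qed
  have r5: "cqpow q (- 2*N) = Q*c"
  proof -
    have ex: "- 2*N = 1 + (- 2*N - 1)" by (simp add: field_simps)
    have "cqpow q (- 2*N) = cqpow q (1 + (- 2*N - 1))" by (subst ex) (rule refl)
    then show ?thesis unfolding cq_add Q1 c_def .
  qed
  have nM: "2*n \<le> M" using nle by linarith
  have C: "(\<Sum>k\<le>2*n+1. aL Q c \<alpha> (\<alpha>*\<alpha>*(Q*Q^(2*n+1))) (2*n+1) k * gb Q c k a)
       = (\<Sum>j\<le>n. cR Q (\<alpha>*\<alpha>*(Q^3*(Q*Q)^n)) (Q*Q*(\<alpha>*\<alpha>)) (Q*Q*c) (Q*c) n j / (1-c) * hb Q c j a)"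
    unfolding Q_def cM by (rule core[OF q0 q1 nM h1 h2 h3 a0[unfolded cM]])
  have LHS: "phi43_term (2*n+1) (\<alpha>\<^sup>2 * Q ^ (2*n+2)) a (- (c/a)) (Q * \<alpha>) (- (Q * \<alpha>)) c Q Q
      = (\<Sum>k\<le>2*n+1. aL Q c \<alpha> (\<alpha>*\<alpha>*(Q*Q^(2*n+1))) (2*n+1) k * gb Q c k a)"
  proof -
    have e: "\<alpha>\<^sup>2 * Q ^ (2*n+2) = \<alpha>*\<alpha>*(Q*Q^(2*n+1))" by (simp add: power2_eq_square)
    show ?thesis unfolding phi43_term_def e aL_def gb_def
      by (rule sum.cong) (simp_all add: divide_inverse mult_ac)
  qed
  have RHS: "(a - c/a) / (1 - c) * phi43_term n (\<alpha>\<^sup>2 * Q ^ (2*n+3)) (a*a) (c*c/(a*a)) (Q\<^sup>2 * \<alpha>\<^sup>2) (Q*Q*c) (Q*c) (Q\<^sup>2) (Q\<^sup>2)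
      = (\<Sum>j\<le>n. cR Q (\<alpha>*\<alpha>*(Q^3*(Q*Q)^n)) (Q*Q*(\<alpha>*\<alpha>)) (Q*Q*c) (Q*c) n j / (1-c) * hb Q c j a)"
  proof -
    have e: "\<alpha>\<^sup>2 * Q ^ (2*n+3) = \<alpha>*\<alpha>*(Q^3*(Q*Q)^n)"
      by (simp add: power2_eq_square power_add power_mult power_mult_distrib)
    show ?thesis unfolding phi43_term_def e unfolding cR_def hb_def sum_distrib_left power2_eq_square
      by (rule sum.cong) (simp_all add: divide_inverse mult_ac)
  qed
  show ?thesis
    unfolding Let_def Q_def[symmetric] N_def[symmetric] a_def[symmetric] c_def[symmetric] r1 r2 r3 r4 r5
    using LHS RHS C by simp
qed


end
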